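(* If $Q$ and $Q'$ are proper quadrilaterals in $K^2$ sharing the same vertices, then two lines are $Q$-orthogonal if and only if they are $Q'$-orthogonal.
   Context: $K$ is a field of characteristic $\neq 2$. Every line $L$ in $K^2$ has an equation $tX-uY+v=0$ normalized so that $t=1$ if $u=0$ and $u=1$ if $u\neq 0$; coefficients denoted $t_L,u_L,v_L$. A quadrilateral $Q=ABA'B'$ consists of four distinct lines $A,B,A',B'$ (sides), not all through one point, with adjacent sides ($A,B$; $B,A'$; $A',B'$; $B',A$) not parallel; opposite sides may be parallel. Vertices: $A\cap B$, $B\cap A'$, $A'\cap B'$, $B'\cap A$. $Q$ is proper if no three sides pass through a common point. Let $\alpha=t_Au_Bu_{A'}u_{B'}-u_At_Bu_{A'}u_{B'}+u_Au_Bt_{A'}u_{B'}-u_Au_Bu_{A'}t_{B'}$, $\beta=t_Au_Bt_{A'}u_{B'}-u_At_Bu_{A'}t_{B'}$, $\gamma=t_At_Bt_{A'}u_{B'}-t_At_Bu_{A'}t_{B'}+t_Au_Bt_{A'}t_{B'}-u_At_Bt_{A'}t_{B'}$, and $\langle \mathbf v,\mathbf w\rangle_Q=\mathbf v^T\begin{pmatrix}\gamma&-\beta\\-\beta&\alpha\end{pmatrix}\mathbf w$. Lines $\ell_1,\ell_2$ are $Q$-orthogonal if $\langle (u_{\ell_1},t_{\ell_1}),(u_{\ell_2},t_{\ell_2})\rangle_Q=0$. *)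

theory Defs
  imports Main
begin

text \<open>A line in K^2 is represented by its normalized coefficient triple (t,u,v),
  standing for the line t*X - u*Y + v = 0, normalized so that t = 1 if u = 0
  and u = 1 if u is nonzero. Each line has exactly one such triple.\<close>

type_synonym 'a line = "'a \<times> 'a \<times> 'a"

definition tL :: "'a line \<Rightarrow> 'a" where "tL L = fst L"
definition uL :: "'a line \<Rightarrow> 'a" where "uL L = fst (snd L)"
definition vL :: "'a line \<Rightarrow> 'a" where "vL L = snd (snd L)"

definition is_line :: "'a::field line \<Rightarrow> bool" where
  "is_line L \<longleftrightarrow> (uL L = 0 \<and> tL L = 1) \<or> uL L = 1"

definition line_pts :: "'a::field line \<Rightarrow> ('a \<times> 'a) set" where
  "line_pts L = {(x, y). tL L * x - uL L * y + vL L = 0}"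

definition parallel :: "'a::field line \<Rightarrow> 'a line \<Rightarrow> bool" where
  "parallel L M \<longleftrightarrow> line_pts L = line_pts M \<or> line_pts L \<inter> line_pts M = {}"

definition meet :: "'a::field line \<Rightarrow> 'a line \<Rightarrow> 'a \<times> 'a" where
  "meet L M = (THE p. p \<in> line_pts L \<and> p \<in> line_pts M)"

definition concurrent3 :: "'a::field line \<Rightarrow> 'a line \<Rightarrow> 'a line \<Rightarrow> bool" where
  "concurrent3 L M N \<longleftrightarrow> (\<exists>p. p \<in> line_pts L \<and> p \<in> line_pts M \<and> p \<in> line_pts N)"

definition is_quad :: "'a::field line \<Rightarrow> 'a line \<Rightarrow> 'a line \<Rightarrow> 'a line \<Rightarrow> bool" where
  "is_quad A B A' B' \<longleftrightarrow>
     is_line A \<and> is_line B \<and> is_line A' \<and> is_line B' \<and>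
     distinct [A, B, A', B'] \<and>
     \<not> (\<exists>p. p \<in> line_pts A \<and> p \<in> line_pts B \<and> p \<in> line_pts A' \<and> p \<in> line_pts B') \<and>
     \<not> parallel A B \<and> \<not> parallel B A' \<and> \<not> parallel A' B' \<and> \<not> parallel B' A"

definition quad_vertices :: "'a::field line \<Rightarrow> 'a line \<Rightarrow> 'a line \<Rightarrow> 'a line \<Rightarrow> ('a \<times> 'a) set" where
  "quad_vertices A B A' B' = {meet A B, meet B A', meet A' B', meet B' A}"

definition proper_quad :: "'a::field line \<Rightarrow> 'a line \<Rightarrow> 'a line \<Rightarrow> 'a line \<Rightarrow> bool" where
  "proper_quad A B A' B' \<longleftrightarrow> is_quad A B A' B' \<and>
     \<not> concurrent3 A B A' \<and> \<not> concurrent3 A B B' \<and>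
     \<not> concurrent3 A A' B' \<and> \<not> concurrent3 B A' B'"

definition qalpha :: "'a::field line \<Rightarrow> 'a line \<Rightarrow> 'a line \<Rightarrow> 'a line \<Rightarrow> 'a" where
  "qalpha A B A' B' =
     tL A * uL B * uL A' * uL B' - uL A * tL B * uL A' * uL B'
   + uL A * uL B * tL A' * uL B' - uL A * uL B * uL A' * tL B'"

definition qbeta :: "'a::field line \<Rightarrow> 'a line \<Rightarrow> 'a line \<Rightarrow> 'a line \<Rightarrow> 'a" where
  "qbeta A B A' B' = tL A * uL B * tL A' * uL B' - uL A * tL B * uL A' * tL B'"

definition qgamma :: "'a::field line \<Rightarrow> 'a line \<Rightarrow> 'a line \<Rightarrow> 'a line \<Rightarrow> 'a" where
  "qgamma A B A' B' =
     tL A * tL B * tL A' * uL B' - tL A * tL B * uL A' * tL B'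
   + tL A * uL B * tL A' * tL B' - uL A * tL B * tL A' * tL B'"

definition q_inner :: "'a::field line \<Rightarrow> 'a line \<Rightarrow> 'a line \<Rightarrow> 'a line \<Rightarrow> 'a \<times> 'a \<Rightarrow> 'a \<times> 'a \<Rightarrow> 'a" where
  "q_inner A B A' B' v w =
     qgamma A B A' B' * fst v * fst w - qbeta A B A' B' * fst v * snd w
   - qbeta A B A' B' * snd v * fst w + qalpha A B A' B' * snd v * snd w"

definition q_orth :: "'a::field line \<Rightarrow> 'a line \<Rightarrow> 'a line \<Rightarrow> 'a line \<Rightarrow> 'a line \<Rightarrow> 'a line \<Rightarrow> bool" where
  "q_orth A B A' B' l1 l2 \<longleftrightarrow> q_inner A B A' B' (uL l1, tL l1) (uL l2, tL l2) = 0"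

end

theory Submission
  imports Defs
begin

definition dl :: "'a::field \<times> 'a \<Rightarrow> 'a \<times> 'a \<Rightarrow> 'a line" where
  "dl p q = (snd q - snd p, fst q - fst p, 0)"

definition H :: "'a::field \<times> 'a \<Rightarrow> 'a \<times> 'a \<Rightarrow> 'a \<times> 'a \<Rightarrow> 'a \<times> 'a \<Rightarrow> 'a \<times> 'a \<Rightarrow> 'a \<times> 'a \<Rightarrow> 'a" where
  "H p1 p2 p3 p4 v w = q_inner (dl p4 p1) (dl p1 p2) (dl p2 p3) (dl p3 p4) v w"

lemma H12: "H b a c d v w = - H a b c d v w"
  unfolding H_def q_inner_def qalpha_def qbeta_def qgamma_def dl_def tL_def uL_def
  by (simp add: algebra_simps)
lemma H23: "H a c b d v w = - H a b c d v w"
  unfolding H_def q_inner_def qalpha_def qbeta_def qgamma_def dl_def tL_def uL_def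
  by (simp add: algebra_simps)
lemma H34: "H a b d c v w = - H a b c d v w"
  unfolding H_def q_inner_def qalpha_def qbeta_def qgamma_def dl_def tL_def uL_def
  by (simp add: algebra_simps)

lemma HP0: "H a b c d v w = H a b c d v w"
  unfolding H_def q_inner_def qalpha_def qbeta_def qgamma_def dl_def tL_def uL_def
  by (simp add: algebra_simps)
lemma HP1: "H a b d c v w = - H a b c d v w"
  unfolding H_def q_inner_def qalpha_def qbeta_def qgamma_def dl_def tL_def uL_def
  by (simp add: algebra_simps)
lemma HP2: "H a c b d v w = - H a b c d v w"
  unfolding H_def q_inner_def qalpha_def qbeta_def qgamma_def dl_def tL_def uL_def
  by (simp add: algebra_simps)
lemma HP3: "H a c d b v w = H a b c d v w"
  unfolding H_def q_inner_def qalpha_def qbeta_def qgamma_def dl_def tL_def uL_def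
  by (simp add: algebra_simps)
lemma HP4: "H a d b c v w = H a b c d v w"
  unfolding H_def q_inner_def qalpha_def qbeta_def qgamma_def dl_def tL_def uL_def
  by (simp add: algebra_simps)
lemma HP5: "H a d c b v w = - H a b c d v w"
  unfolding H_def q_inner_def qalpha_def qbeta_def qgamma_def dl_def tL_def uL_def
  by (simp add: algebra_simps)
lemma HP6: "H b a c d v w = - H a b c d v w"
  unfolding H_def q_inner_def qalpha_def qbeta_def qgamma_def dl_def tL_def uL_def
  by (simp add: algebra_simps)
lemma HP7: "H b a d c v w = H a b c d v w"
  unfolding H_def q_inner_def qalpha_def qbeta_def qgamma_def dl_def tL_def uL_def
  by (simp add: algebra_simps)
lemma HP8: "H b c a d v w = H a b c d v w"
  unfolding H_def q_inner_def qalpha_def qbeta_def qgamma_def dl_def tL_def uL_def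
  by (simp add: algebra_simps)
lemma HP9: "H b c d a v w = - H a b c d v w"
  unfolding H_def q_inner_def qalpha_def qbeta_def qgamma_def dl_def tL_def uL_def
  by (simp add: algebra_simps)
lemma HP10: "H b d a c v w = - H a b c d v w"
  unfolding H_def q_inner_def qalpha_def qbeta_def qgamma_def dl_def tL_def uL_def
  by (simp add: algebra_simps)
lemma HP11: "H b d c a v w = H a b c d v w"
  unfolding H_def q_inner_def qalpha_def qbeta_def qgamma_def dl_def tL_def uL_def
  by (simp add: algebra_simps)
lemma HP12: "H c a b d v w = H a b c d v w"
  unfolding H_def q_inner_def qalpha_def qbeta_def qgamma_def dl_def tL_def uL_def
  by (simp add: algebra_simps)
lemma HP13: "H c a d b v w = - H a b c d v w"
  unfolding H_def q_inner_def qalpha_def qbeta_def qgamma_def dl_def tL_def uL_def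
  by (simp add: algebra_simps)
lemma HP14: "H c b a d v w = - H a b c d v w"
  unfolding H_def q_inner_def qalpha_def qbeta_def qgamma_def dl_def tL_def uL_def
  by (simp add: algebra_simps)
lemma HP15: "H c b d a v w = H a b c d v w"
  unfolding H_def q_inner_def qalpha_def qbeta_def qgamma_def dl_def tL_def uL_def
  by (simp add: algebra_simps)
lemma HP16: "H c d a b v w = H a b c d v w"
  unfolding H_def q_inner_def qalpha_def qbeta_def qgamma_def dl_def tL_def uL_def
  by (simp add: algebra_simps)
lemma HP17: "H c d b a v w = - H a b c d v w"
  unfolding H_def q_inner_def qalpha_def qbeta_def qgamma_def dl_def tL_def uL_def
  by (simp add: algebra_simps)
lemma HP18: "H d a b c v w = - H a b c d v w"
  unfolding H_def q_inner_def qalpha_def qbeta_def qgamma_def dl_def tL_def uL_def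
  by (simp add: algebra_simps)
lemma HP19: "H d a c b v w = H a b c d v w"
  unfolding H_def q_inner_def qalpha_def qbeta_def qgamma_def dl_def tL_def uL_def
  by (simp add: algebra_simps)
lemma HP20: "H d b a c v w = H a b c d v w"
  unfolding H_def q_inner_def qalpha_def qbeta_def qgamma_def dl_def tL_def uL_def
  by (simp add: algebra_simps)
lemma HP21: "H d b c a v w = - H a b c d v w"
  unfolding H_def q_inner_def qalpha_def qbeta_def qgamma_def dl_def tL_def uL_def
  by (simp add: algebra_simps)
lemma HP22: "H d c a b v w = - H a b c d v w"
  unfolding H_def q_inner_def qalpha_def qbeta_def qgamma_def dl_def tL_def uL_def
  by (simp add: algebra_simps)
lemma HP23: "H d c b a v w = H a b c d v w"
  unfolding H_def q_inner_def qalpha_def qbeta_def qgamma_def dl_def tL_def uL_def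
  by (simp add: algebra_simps)

lemma disjE4: "P1 \<or> P2 \<or> P3 \<or> P4 \<Longrightarrow> (P1 \<Longrightarrow> R) \<Longrightarrow> (P2 \<Longrightarrow> R) \<Longrightarrow> (P3 \<Longrightarrow> R) \<Longrightarrow> (P4 \<Longrightarrow> R) \<Longrightarrow> R"
  by blast

lemma Hperm:
  assumes "{r1,r2,r3,r4} = {p1,p2,p3,p4}" and d: "distinct [r1,r2,r3,r4]"
  shows "(\<forall>v w. H r1 r2 r3 r4 v w = H p1 p2 p3 p4 v w) \<or> (\<forall>v w. H r1 r2 r3 r4 v w = - H p1 p2 p3 p4 v w)"
proof -
  have m1: "r1 = p1 \<or> r1 = p2 \<or> r1 = p3 \<or> r1 = p4" using assms(1) by blast
  have m2: "r2 = p1 \<or> r2 = p2 \<or> r2 = p3 \<or> r2 = p4" using assms(1) by blast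
  have m3: "r3 = p1 \<or> r3 = p2 \<or> r3 = p3 \<or> r3 = p4" using assms(1) by blast
  have m4: "r4 = p1 \<or> r4 = p2 \<or> r4 = p3 \<or> r4 = p4" using assms(1) by blast
  show ?thesis
  proof (rule m1[THEN disjE4])
    assume e1: "r1 = p1"
    show ?thesis
    proof (rule m2[THEN disjE4])
      assume e2: "r2 = p1"
      show ?thesis using d e1 e2 by simp
    next
      assume e2: "r2 = p2"
      show ?thesis
      proof (rule m3[THEN disjE4])
        assume e3: "r3 = p1"
        show ?thesis using d e1 e3 by simp
      next
        assume e3: "r3 = p2"
        show ?thesis using d e2 e3 by simp
      next
        assume e3: "r3 = p3"
        show ?thesis
        proof (rule m4[THEN disjE4])
          assume e4: "r4 = p1"
          show ?thesis using d e1 e4 by simp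
        next
          assume e4: "r4 = p2"
          show ?thesis using d e2 e4 by simp
        next
          assume e4: "r4 = p3"
          show ?thesis using d e3 e4 by simp
        next
          assume e4: "r4 = p4"
          show ?thesis unfolding e1 e2 e3 e4 using HP0[where a=p1 and b=p2 and c=p3 and d=p4] by simp
        qed
      next
        assume e3: "r3 = p4"
        show ?thesis
        proof (rule m4[THEN disjE4])
          assume e4: "r4 = p1"
          show ?thesis using d e1 e4 by simp
        next
          assume e4: "r4 = p2"
          show ?thesis using d e2 e4 by simp
        next
          assume e4: "r4 = p3"
          show ?thesis unfolding e1 e2 e3 e4 using HP1[where a=p1 and b=p2 and c=p3 and d=p4] by simp
        next
          assume e4: "r4 = p4"
          show ?thesis using d e3 e4 by simp
        qed
      qed
    next
      assume e2: "r2 = p3"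
      show ?thesis
      proof (rule m3[THEN disjE4])
        assume e3: "r3 = p1"
        show ?thesis using d e1 e3 by simp
      next
        assume e3: "r3 = p2"
        show ?thesis
        proof (rule m4[THEN disjE4])
          assume e4: "r4 = p1"
          show ?thesis using d e1 e4 by simp
        next
          assume e4: "r4 = p2"
          show ?thesis using d e3 e4 by simp
        next
          assume e4: "r4 = p3"
          show ?thesis using d e2 e4 by simp
        next
          assume e4: "r4 = p4"
          show ?thesis unfolding e1 e2 e3 e4 using HP2[where a=p1 and b=p2 and c=p3 and d=p4] by simp
        qed
      next
        assume e3: "r3 = p3"
        show ?thesis using d e2 e3 by simp
      next
        assume e3: "r3 = p4"
        show ?thesis
        proof (rule m4[THEN disjE4])
          assume e4: "r4 = p1"
          show ?thesis using d e1 e4 by simp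
        next
          assume e4: "r4 = p2"
          show ?thesis unfolding e1 e2 e3 e4 using HP3[where a=p1 and b=p2 and c=p3 and d=p4] by simp
        next
          assume e4: "r4 = p3"
          show ?thesis using d e2 e4 by simp
        next
          assume e4: "r4 = p4"
          show ?thesis using d e3 e4 by simp
        qed
      qed
    next
      assume e2: "r2 = p4"
      show ?thesis
      proof (rule m3[THEN disjE4])
        assume e3: "r3 = p1"
        show ?thesis using d e1 e3 by simp
      next
        assume e3: "r3 = p2"
        show ?thesis
        proof (rule m4[THEN disjE4])
          assume e4: "r4 = p1"
          show ?thesis using d e1 e4 by simp
        next
          assume e4: "r4 = p2"
          show ?thesis using d e3 e4 by simp
        next
          assume e4: "r4 = p3"
          show ?thesis unfolding e1 e2 e3 e4 using HP4[where a=p1 and b=p2 and c=p3 and d=p4] by simp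
        next
          assume e4: "r4 = p4"
          show ?thesis using d e2 e4 by simp
        qed
      next
        assume e3: "r3 = p3"
        show ?thesis
        proof (rule m4[THEN disjE4])
          assume e4: "r4 = p1"
          show ?thesis using d e1 e4 by simp
        next
          assume e4: "r4 = p2"
          show ?thesis unfolding e1 e2 e3 e4 using HP5[where a=p1 and b=p2 and c=p3 and d=p4] by simp
        next
          assume e4: "r4 = p3"
          show ?thesis using d e3 e4 by simp
        next
          assume e4: "r4 = p4"
          show ?thesis using d e2 e4 by simp
        qed
      next
        assume e3: "r3 = p4"
        show ?thesis using d e2 e3 by simp
      qed
    qed
  next
    assume e1: "r1 = p2"
    show ?thesis
    proof (rule m2[THEN disjE4])
      assume e2: "r2 = p1"
      show ?thesis
      proof (rule m3[THEN disjE4])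
        assume e3: "r3 = p1"
        show ?thesis using d e2 e3 by simp
      next
        assume e3: "r3 = p2"
        show ?thesis using d e1 e3 by simp
      next
        assume e3: "r3 = p3"
        show ?thesis
        proof (rule m4[THEN disjE4])
          assume e4: "r4 = p1"
          show ?thesis using d e2 e4 by simp
        next
          assume e4: "r4 = p2"
          show ?thesis using d e1 e4 by simp
        next
          assume e4: "r4 = p3"
          show ?thesis using d e3 e4 by simp
        next
          assume e4: "r4 = p4"
          show ?thesis unfolding e1 e2 e3 e4 using HP6[where a=p1 and b=p2 and c=p3 and d=p4] by simp
        qed
      next
        assume e3: "r3 = p4"
        show ?thesis
        proof (rule m4[THEN disjE4])
          assume e4: "r4 = p1"
          show ?thesis using d e2 e4 by simp
        next
          assume e4: "r4 = p2"
          show ?thesis using d e1 e4 by simp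
        next
          assume e4: "r4 = p3"
          show ?thesis unfolding e1 e2 e3 e4 using HP7[where a=p1 and b=p2 and c=p3 and d=p4] by simp
        next
          assume e4: "r4 = p4"
          show ?thesis using d e3 e4 by simp
        qed
      qed
    next
      assume e2: "r2 = p2"
      show ?thesis using d e1 e2 by simp
    next
      assume e2: "r2 = p3"
      show ?thesis
      proof (rule m3[THEN disjE4])
        assume e3: "r3 = p1"
        show ?thesis
        proof (rule m4[THEN disjE4])
          assume e4: "r4 = p1"
          show ?thesis using d e3 e4 by simp
        next
          assume e4: "r4 = p2"
          show ?thesis using d e1 e4 by simp
        next
          assume e4: "r4 = p3"
          show ?thesis using d e2 e4 by simp
        next
          assume e4: "r4 = p4"
          show ?thesis unfolding e1 e2 e3 e4 using HP8[where a=p1 and b=p2 and c=p3 and d=p4] by simp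
        qed
      next
        assume e3: "r3 = p2"
        show ?thesis using d e1 e3 by simp
      next
        assume e3: "r3 = p3"
        show ?thesis using d e2 e3 by simp
      next
        assume e3: "r3 = p4"
        show ?thesis
        proof (rule m4[THEN disjE4])
          assume e4: "r4 = p1"
          show ?thesis unfolding e1 e2 e3 e4 using HP9[where a=p1 and b=p2 and c=p3 and d=p4] by simp
        next
          assume e4: "r4 = p2"
          show ?thesis using d e1 e4 by simp
        next
          assume e4: "r4 = p3"
          show ?thesis using d e2 e4 by simp
        next
          assume e4: "r4 = p4"
          show ?thesis using d e3 e4 by simp
        qed
      qed
    next
      assume e2: "r2 = p4"
      show ?thesis
      proof (rule m3[THEN disjE4])
        assume e3: "r3 = p1"
        show ?thesis
        proof (rule m4[THEN disjE4])
          assume e4: "r4 = p1"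
          show ?thesis using d e3 e4 by simp
        next
          assume e4: "r4 = p2"
          show ?thesis using d e1 e4 by simp
        next
          assume e4: "r4 = p3"
          show ?thesis unfolding e1 e2 e3 e4 using HP10[where a=p1 and b=p2 and c=p3 and d=p4] by simp
        next
          assume e4: "r4 = p4"
          show ?thesis using d e2 e4 by simp
        qed
      next
        assume e3: "r3 = p2"
        show ?thesis using d e1 e3 by simp
      next
        assume e3: "r3 = p3"
        show ?thesis
        proof (rule m4[THEN disjE4])
          assume e4: "r4 = p1"
          show ?thesis unfolding e1 e2 e3 e4 using HP11[where a=p1 and b=p2 and c=p3 and d=p4] by simp
        next
          assume e4: "r4 = p2"
          show ?thesis using d e1 e4 by simp
        next
          assume e4: "r4 = p3"
          show ?thesis using d e3 e4 by simp
        next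
          assume e4: "r4 = p4"
          show ?thesis using d e2 e4 by simp
        qed
      next
        assume e3: "r3 = p4"
        show ?thesis using d e2 e3 by simp
      qed
    qed
  next
    assume e1: "r1 = p3"
    show ?thesis
    proof (rule m2[THEN disjE4])
      assume e2: "r2 = p1"
      show ?thesis
      proof (rule m3[THEN disjE4])
        assume e3: "r3 = p1"
        show ?thesis using d e2 e3 by simp
      next
        assume e3: "r3 = p2"
        show ?thesis
        proof (rule m4[THEN disjE4])
          assume e4: "r4 = p1"
          show ?thesis using d e2 e4 by simp
        next
          assume e4: "r4 = p2"
          show ?thesis using d e3 e4 by simp
        next
          assume e4: "r4 = p3"
          show ?thesis using d e1 e4 by simp
        next
          assume e4: "r4 = p4"
          show ?thesis unfolding e1 e2 e3 e4 using HP12[where a=p1 and b=p2 and c=p3 and d=p4] by simp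
        qed
      next
        assume e3: "r3 = p3"
        show ?thesis using d e1 e3 by simp
      next
        assume e3: "r3 = p4"
        show ?thesis
        proof (rule m4[THEN disjE4])
          assume e4: "r4 = p1"
          show ?thesis using d e2 e4 by simp
        next
          assume e4: "r4 = p2"
          show ?thesis unfolding e1 e2 e3 e4 using HP13[where a=p1 and b=p2 and c=p3 and d=p4] by simp
        next
          assume e4: "r4 = p3"
          show ?thesis using d e1 e4 by simp
        next
          assume e4: "r4 = p4"
          show ?thesis using d e3 e4 by simp
        qed
      qed
    next
      assume e2: "r2 = p2"
      show ?thesis
      proof (rule m3[THEN disjE4])
        assume e3: "r3 = p1"
        show ?thesis
        proof (rule m4[THEN disjE4])
          assume e4: "r4 = p1"
          show ?thesis using d e3 e4 by simp
        next
          assume e4: "r4 = p2"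
          show ?thesis using d e2 e4 by simp
        next
          assume e4: "r4 = p3"
          show ?thesis using d e1 e4 by simp
        next
          assume e4: "r4 = p4"
          show ?thesis unfolding e1 e2 e3 e4 using HP14[where a=p1 and b=p2 and c=p3 and d=p4] by simp
        qed
      next
        assume e3: "r3 = p2"
        show ?thesis using d e2 e3 by simp
      next
        assume e3: "r3 = p3"
        show ?thesis using d e1 e3 by simp
      next
        assume e3: "r3 = p4"
        show ?thesis
        proof (rule m4[THEN disjE4])
          assume e4: "r4 = p1"
          show ?thesis unfolding e1 e2 e3 e4 using HP15[where a=p1 and b=p2 and c=p3 and d=p4] by simp
        next
          assume e4: "r4 = p2"
          show ?thesis using d e2 e4 by simp
        next
          assume e4: "r4 = p3"
          show ?thesis using d e1 e4 by simp
        next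
          assume e4: "r4 = p4"
          show ?thesis using d e3 e4 by simp
        qed
      qed
    next
      assume e2: "r2 = p3"
      show ?thesis using d e1 e2 by simp
    next
      assume e2: "r2 = p4"
      show ?thesis
      proof (rule m3[THEN disjE4])
        assume e3: "r3 = p1"
        show ?thesis
        proof (rule m4[THEN disjE4])
          assume e4: "r4 = p1"
          show ?thesis using d e3 e4 by simp
        next
          assume e4: "r4 = p2"
          show ?thesis unfolding e1 e2 e3 e4 using HP16[where a=p1 and b=p2 and c=p3 and d=p4] by simp
        next
          assume e4: "r4 = p3"
          show ?thesis using d e1 e4 by simp
        next
          assume e4: "r4 = p4"
          show ?thesis using d e2 e4 by simp
        qed
      next
        assume e3: "r3 = p2"
        show ?thesis
        proof (rule m4[THEN disjE4])
          assume e4: "r4 = p1"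
          show ?thesis unfolding e1 e2 e3 e4 using HP17[where a=p1 and b=p2 and c=p3 and d=p4] by simp
        next
          assume e4: "r4 = p2"
          show ?thesis using d e3 e4 by simp
        next
          assume e4: "r4 = p3"
          show ?thesis using d e1 e4 by simp
        next
          assume e4: "r4 = p4"
          show ?thesis using d e2 e4 by simp
        qed
      next
        assume e3: "r3 = p3"
        show ?thesis using d e1 e3 by simp
      next
        assume e3: "r3 = p4"
        show ?thesis using d e2 e3 by simp
      qed
    qed
  next
    assume e1: "r1 = p4"
    show ?thesis
    proof (rule m2[THEN disjE4])
      assume e2: "r2 = p1"
      show ?thesis
      proof (rule m3[THEN disjE4])
        assume e3: "r3 = p1"
        show ?thesis using d e2 e3 by simp
      next
        assume e3: "r3 = p2"
        show ?thesis
        proof (rule m4[THEN disjE4])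
          assume e4: "r4 = p1"
          show ?thesis using d e2 e4 by simp
        next
          assume e4: "r4 = p2"
          show ?thesis using d e3 e4 by simp
        next
          assume e4: "r4 = p3"
          show ?thesis unfolding e1 e2 e3 e4 using HP18[where a=p1 and b=p2 and c=p3 and d=p4] by simp
        next
          assume e4: "r4 = p4"
          show ?thesis using d e1 e4 by simp
        qed
      next
        assume e3: "r3 = p3"
        show ?thesis
        proof (rule m4[THEN disjE4])
          assume e4: "r4 = p1"
          show ?thesis using d e2 e4 by simp
        next
          assume e4: "r4 = p2"
          show ?thesis unfolding e1 e2 e3 e4 using HP19[where a=p1 and b=p2 and c=p3 and d=p4] by simp
        next
          assume e4: "r4 = p3"
          show ?thesis using d e3 e4 by simp
        next
          assume e4: "r4 = p4"
          show ?thesis using d e1 e4 by simp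
        qed
      next
        assume e3: "r3 = p4"
        show ?thesis using d e1 e3 by simp
      qed
    next
      assume e2: "r2 = p2"
      show ?thesis
      proof (rule m3[THEN disjE4])
        assume e3: "r3 = p1"
        show ?thesis
        proof (rule m4[THEN disjE4])
          assume e4: "r4 = p1"
          show ?thesis using d e3 e4 by simp
        next
          assume e4: "r4 = p2"
          show ?thesis using d e2 e4 by simp
        next
          assume e4: "r4 = p3"
          show ?thesis unfolding e1 e2 e3 e4 using HP20[where a=p1 and b=p2 and c=p3 and d=p4] by simp
        next
          assume e4: "r4 = p4"
          show ?thesis using d e1 e4 by simp
        qed
      next
        assume e3: "r3 = p2"
        show ?thesis using d e2 e3 by simp
      next
        assume e3: "r3 = p3"
        show ?thesis
        proof (rule m4[THEN disjE4])
          assume e4: "r4 = p1"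
          show ?thesis unfolding e1 e2 e3 e4 using HP21[where a=p1 and b=p2 and c=p3 and d=p4] by simp
        next
          assume e4: "r4 = p2"
          show ?thesis using d e2 e4 by simp
        next
          assume e4: "r4 = p3"
          show ?thesis using d e3 e4 by simp
        next
          assume e4: "r4 = p4"
          show ?thesis using d e1 e4 by simp
        qed
      next
        assume e3: "r3 = p4"
        show ?thesis using d e1 e3 by simp
      qed
    next
      assume e2: "r2 = p3"
      show ?thesis
      proof (rule m3[THEN disjE4])
        assume e3: "r3 = p1"
        show ?thesis
        proof (rule m4[THEN disjE4])
          assume e4: "r4 = p1"
          show ?thesis using d e3 e4 by simp
        next
          assume e4: "r4 = p2"
          show ?thesis unfolding e1 e2 e3 e4 using HP22[where a=p1 and b=p2 and c=p3 and d=p4] by simp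
        next
          assume e4: "r4 = p3"
          show ?thesis using d e2 e4 by simp
        next
          assume e4: "r4 = p4"
          show ?thesis using d e1 e4 by simp
        qed
      next
        assume e3: "r3 = p2"
        show ?thesis
        proof (rule m4[THEN disjE4])
          assume e4: "r4 = p1"
          show ?thesis unfolding e1 e2 e3 e4 using HP23[where a=p1 and b=p2 and c=p3 and d=p4] by simp
        next
          assume e4: "r4 = p2"
          show ?thesis using d e3 e4 by simp
        next
          assume e4: "r4 = p3"
          show ?thesis using d e2 e4 by simp
        next
          assume e4: "r4 = p4"
          show ?thesis using d e1 e4 by simp
        qed
      next
        assume e3: "r3 = p3"
        show ?thesis using d e2 e3 by simp
      next
        assume e3: "r3 = p4"
        show ?thesis using d e1 e3 by simp
      qed
    next
      assume e2: "r2 = p4"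
      show ?thesis using d e1 e2 by simp
    qed
  qed
qed

lemma line_dir:
  assumes L: "is_line L" and p: "p \<in> line_pts L" and q: "q \<in> line_pts L" and pq: "p \<noteq> q"
  shows "\<exists>k. k \<noteq> 0 \<and> tL L = k * tL (dl p q) \<and> uL L = k * uL (dl p q)"
proof -
  obtain px py qx qy where pp: "p = (px, py)" and qq: "q = (qx, qy)" by (cases p, cases q) auto
  have e1: "tL L * px - uL L * py + vL L = 0" using p pp by (simp add: line_pts_def)
  have e2: "tL L * qx - uL L * qy + vL L = 0" using q qq by (simp add: line_pts_def)
  have "tL L * (qx - px) - uL L * (qy - py) = (tL L * qx - uL L * qy + vL L) - (tL L * px - uL L * py + vL L)"
    by (simp add: algebra_simps)
  then have rel: "tL L * (qx - px) = uL L * (qy - py)" using e1 e2 by simp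
  show ?thesis
  proof (cases "qx - px = 0")
    case True
    then have dy: "qy - py \<noteq> 0" using pq pp qq by auto
    have u0: "uL L = 0" using rel True dy by simp
    then have t1: "tL L = 1" using L by (simp add: is_line_def)
    show ?thesis
      by (rule exI[of _ "1 / (qy - py)"]) (use dy True u0 t1 pp qq in \<open>simp add: dl_def tL_def uL_def\<close>)
  next
    case False
    have "uL L \<noteq> 0"
    proof
      assume "uL L = 0"
      then have "tL L = 1" using L by (simp add: is_line_def)
      then show False using rel False \<open>uL L = 0\<close> by simp
    qed
    have t: "tL L = uL L / (qx - px) * (qy - py)" using rel False by (simp add: field_simps)
    show ?thesis
      by (rule exI[of _ "uL L / (qx - px)"]) (use False t \<open>uL L \<noteq> 0\<close> pp qq in \<open>simp add: dl_def tL_def uL_def\<close>)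
  qed
qed

lemma line_eq:
  assumes L: "is_line L" and M: "is_line M" and pq: "p \<noteq> q"
    and "p \<in> line_pts L" "q \<in> line_pts L" "p \<in> line_pts M" "q \<in> line_pts M"
  shows "L = M"
proof -
  obtain k where k: "k \<noteq> 0" "tL L = k * tL (dl p q)" "uL L = k * uL (dl p q)"
    using line_dir[OF L assms(4,5) pq] by blast
  obtain k' where k': "k' \<noteq> 0" "tL M = k' * tL (dl p q)" "uL M = k' * uL (dl p q)"
    using line_dir[OF M assms(6,7) pq] by blast
  have tu: "tL L = tL M \<and> uL L = uL M"
  proof (cases "uL (dl p q) = 0")
    case True
    then show ?thesis using k k' L M by (simp add: is_line_def)
  next
    case False
    then have "uL L \<noteq> 0" "uL M \<noteq> 0" using k k' by auto
    then have "uL L = 1" "uL M = 1" using L M by (auto simp: is_line_def)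
    then have "k * uL (dl p q) = k' * uL (dl p q)" using k k' by simp
    then have "k = k'" using False by simp
    then show ?thesis using k k' by simp
  qed
  obtain px py where pp: "p = (px, py)" by (cases p) auto
  have "vL L = uL L * py - tL L * px" using assms(4) pp by (simp add: line_pts_def algebra_simps)
  moreover have "vL M = uL M * py - tL M * px" using assms(6) pp by (simp add: line_pts_def algebra_simps)
  ultimately have "vL L = vL M" using tu by simp
  then show ?thesis using tu unfolding tL_def uL_def vL_def by (simp add: prod_eq_iff)
qed

lemma meet_props:
  assumes L: "is_line L" and M: "is_line M" and np: "\<not> parallel L M"
  shows "meet L M \<in> line_pts L \<and> meet L M \<in> line_pts M"
proof -
  obtain p where p: "p \<in> line_pts L" "p \<in> line_pts M" using np by (auto simp: parallel_def)
  have uniq: "x = p" if "x \<in> line_pts L" "x \<in> line_pts M" for x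
  proof (rule ccontr)
    assume "x \<noteq> p"
    have "L = M" by (rule line_eq[OF L M \<open>x \<noteq> p\<close> that(1) p(1) that(2) p(2)])
    then show False using np by (simp add: parallel_def)
  qed
  have "meet L M = p" unfolding meet_def
    by (rule the_equality) (use p uniq in blast)+
  then show ?thesis using p by simp
qed

lemma scale:
  assumes "tL X1 = k1 * tL Y1" "uL X1 = k1 * uL Y1"
    "tL X2 = k2 * tL Y2" "uL X2 = k2 * uL Y2"
    "tL X3 = k3 * tL Y3" "uL X3 = k3 * uL Y3"
    "tL X4 = k4 * tL Y4" "uL X4 = k4 * uL Y4"
  shows "q_inner X1 X2 X3 X4 v w = (k1*k2*k3*k4) * q_inner Y1 Y2 Y3 Y4 v w"
  unfolding q_inner_def qalpha_def qbeta_def qgamma_def assms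
  by (simp add: algebra_simps)

lemma quad_H:
  assumes Q: "proper_quad A B A' B'"
  shows "distinct [meet A B, meet B A', meet A' B', meet B' A] \<and>
    (\<exists>c. c \<noteq> 0 \<and> (\<forall>v w. q_inner A B A' B' v w = c * H (meet A B) (meet B A') (meet A' B') (meet B' A) v w))"
proof -
  let ?P1 = "meet A B" and ?P2 = "meet B A'" and ?P3 = "meet A' B'" and ?P4 = "meet B' A"
  have lines: "is_line A" "is_line B" "is_line A'" "is_line B'" and
    np: "\<not> parallel A B" "\<not> parallel B A'" "\<not> parallel A' B'" "\<not> parallel B' A"
    and n4: "\<not> (\<exists>p. p \<in> line_pts A \<and> p \<in> line_pts B \<and> p \<in> line_pts A' \<and> p \<in> line_pts B')"
    and n3: "\<not> concurrent3 A B A'" "\<not> concurrent3 A B B'" "\<not> concurrent3 A A' B'" "\<not> concurrent3 B A' B'"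
    using Q by (auto simp: proper_quad_def is_quad_def)
  have m1: "?P1 \<in> line_pts A" "?P1 \<in> line_pts B" using meet_props[OF lines(1,2) np(1)] by auto
  have m2: "?P2 \<in> line_pts B" "?P2 \<in> line_pts A'" using meet_props[OF lines(2,3) np(2)] by auto
  have m3: "?P3 \<in> line_pts A'" "?P3 \<in> line_pts B'" using meet_props[OF lines(3,4) np(3)] by auto
  have m4: "?P4 \<in> line_pts B'" "?P4 \<in> line_pts A" using meet_props[OF lines(4,1) np(4)] by auto
  have "?P1 \<noteq> ?P2" using m1 m2 n3(1) unfolding concurrent3_def by metis
  moreover have "?P1 \<noteq> ?P3" using m1 m3 n4 by metis
  moreover have "?P1 \<noteq> ?P4" using m1 m4 n3(2) unfolding concurrent3_def by metis
  moreover have "?P2 \<noteq> ?P3" using m2 m3 n3(4) unfolding concurrent3_def by metis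
  moreover have "?P2 \<noteq> ?P4" using m2 m4 n4 by metis
  moreover have "?P3 \<noteq> ?P4" using m3 m4 n3(3) unfolding concurrent3_def by metis
  ultimately have d: "distinct [?P1, ?P2, ?P3, ?P4]" by simp
  obtain kA where kA: "kA \<noteq> 0" "tL A = kA * tL (dl ?P4 ?P1)" "uL A = kA * uL (dl ?P4 ?P1)"
    using line_dir[OF lines(1) m4(2) m1(1)] d by auto
  obtain kB where kB: "kB \<noteq> 0" "tL B = kB * tL (dl ?P1 ?P2)" "uL B = kB * uL (dl ?P1 ?P2)"
    using line_dir[OF lines(2) m1(2) m2(1)] d by auto
  obtain kA' where kA': "kA' \<noteq> 0" "tL A' = kA' * tL (dl ?P2 ?P3)" "uL A' = kA' * uL (dl ?P2 ?P3)"
    using line_dir[OF lines(3) m2(2) m3(1)] d by auto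
  obtain kB' where kB': "kB' \<noteq> 0" "tL B' = kB' * tL (dl ?P3 ?P4)" "uL B' = kB' * uL (dl ?P3 ?P4)"
    using line_dir[OF lines(4) m3(2) m4(1)] d by auto
  have "\<forall>v w. q_inner A B A' B' v w = (kA*kB*kA'*kB') * H ?P1 ?P2 ?P3 ?P4 v w"
    unfolding H_def using scale[OF kA(2,3) kB(2,3) kA'(2,3) kB'(2,3)] by blast
  moreover have "kA*kB*kA'*kB' \<noteq> 0" using kA kB kA' kB' by simp
  ultimately show ?thesis using d by blast
qed

theorem corollary2p7:
  fixes A B A' B' C D C' D' l1 l2 :: "'a::field line"
  assumes char: "(2::'a) \<noteq> 0"
    and Q: "proper_quad A B A' B'"
    and Q': "proper_quad C D C' D'"
    and same_vertices: "quad_vertices A B A' B' = quad_vertices C D C' D'"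
    and l1: "is_line l1" and l2: "is_line l2"
  shows "q_orth A B A' B' l1 l2 \<longleftrightarrow> q_orth C D C' D' l1 l2"
proof -
  obtain c where c: "c \<noteq> 0" "\<forall>v w. q_inner A B A' B' v w = c * H (meet A B) (meet B A') (meet A' B') (meet B' A) v w"
    using quad_H[OF Q] by blast
  obtain c' where c': "c' \<noteq> 0" "\<forall>v w. q_inner C D C' D' v w = c' * H (meet C D) (meet D C') (meet C' D') (meet D' C) v w"
    and dR: "distinct [meet C D, meet D C', meet C' D', meet D' C]"
    using quad_H[OF Q'] by blast
  have sv: "{meet C D, meet D C', meet C' D', meet D' C} = {meet A B, meet B A', meet A' B', meet B' A}"
    using same_vertices by (simp add: quad_vertices_def)
  have hp: "(\<forall>v w. H (meet C D) (meet D C') (meet C' D') (meet D' C) v w = H (meet A B) (meet B A') (meet A' B') (meet B' A) v w) \<or>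
    (\<forall>v w. H (meet C D) (meet D C') (meet C' D') (meet D' C) v w = - H (meet A B) (meet B A') (meet A' B') (meet B' A) v w)"
    by (rule Hperm[OF sv dR])
  show ?thesis
    unfolding q_orth_def using c c' hp by auto
qed

end
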